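(* Let $H$ be an ideal geometric-value hash function with parameter $\frac{\gamma}{1+\gamma}$, let $\epsilon'>0$ be fixed, and for a set $\mathcal{M}$ run the procedure $\mathtt{DPFM}(\mathcal{M},\epsilon',\gamma,\zeta)$ described in the context, with output $\alpha=\max\{\alpha_p,\alpha_{real},\alpha_{\min}\}$. Let $\hat\alpha=\max\{\alpha_{real},\alpha_p\}$. Then $\mathbb{E}[\alpha]/\mathbb{E}[\hat\alpha]\to 1$ and $\mathrm{Var}[\alpha]/\mathrm{Var}[\hat\alpha]\to 1$ as $|\mathcal{M}|\to\infty$.
   Context: Geometric$(p)$ on $\{1,2,\ldots\}$: $\Pr[Y\le z]=1-(1-p)^z$. An ideal geometric-value hash function $H:\mathcal{X}\times\mathbb{Z}\to\mathbb{N}_+$ with parameter $\frac{\gamma}{1+\gamma}$ ($\gamma>0$): for a key $\zeta$ drawn uniformly, for any distinct inputs $x_1,\ldots,x_t$ the values $H_\zeta(x_1),\ldots,H_\zeta(x_t)$ are i.i.d. Geometric$(\frac{\gamma}{1+\gamma})$. $\mathtt{DPFM}(\mathcal{M},\epsilon',\gamma,\zeta)$ for a finite set $\mathcal{M}$ of distinct ids: set $n_p=\lceil 1/(e^{\epsilon'}-1)\rceil$ and $\alpha_{\min}=\lceil\log_{1+\gamma}\frac{1}{1-e^{-\epsilon'}}\rceil$; let $\alpha_p=\max\{Y_1,\ldots,Y_{n_p}\}$ with $Y_j$ i.i.d. Geometric$(\frac{\gamma}{1+\gamma})$ independent of the hash; let $\alpha_{real}=\max\{H_\zeta(\mathtt{id}):\mathtt{id}\in\mathcal{M}\}$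 with $\zeta$ uniform; output $\alpha=\max\{\alpha_p,\alpha_{real},\alpha_{\min}\}$. *)

theory Defs
  imports "HOL-Probability.Probability"
begin

text \<open>Geometric distribution on {1,2,...}: Pr[Y = k] = (1-p)^(k-1) p, so Pr[Y <= z] = 1-(1-p)^z.\<close>
definition geom1_pmf :: "real \<Rightarrow> nat pmf" where
  "geom1_pmf p = map_pmf Suc (geometric_pmf p)"

definition n_p :: "real \<Rightarrow> nat" where
  "n_p eps = nat \<lceil>1 / (exp eps - 1)\<rceil>"

definition alpha_min :: "real \<Rightarrow> real \<Rightarrow> nat" where
  "alpha_min gam eps = nat \<lceil>log (1 + gam) (1 / (1 - exp (- eps)))\<rceil>"

definition alpha_p_pmf :: "real \<Rightarrow> nat \<Rightarrow> nat pmf" where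
  "alpha_p_pmf p n = map_pmf (\<lambda>f. Max (f ` {..<n})) (Pi_pmf {..<n} 0 (\<lambda>_. geom1_pmf p))"

definition dpfm_space :: "'k measure \<Rightarrow> real \<Rightarrow> real \<Rightarrow> ('k \<times> nat) measure" where
  "dpfm_space K gam eps = K \<Otimes>\<^sub>M measure_pmf (alpha_p_pmf (gam / (1 + gam)) (n_p eps))"

definition alpha_real :: "('k \<Rightarrow> 'x \<Rightarrow> nat) \<Rightarrow> 'x set \<Rightarrow> 'k \<Rightarrow> nat" where
  "alpha_real H Ms \<zeta> = Max ((H \<zeta>) ` Ms)"

definition alpha_hat :: "('k \<Rightarrow> 'x \<Rightarrow> nat) \<Rightarrow> 'x set \<Rightarrow> 'k \<times> nat \<Rightarrow> real" where
  "alpha_hat H Ms = (\<lambda>(\<zeta>, ap). real (max ap (alpha_real H Ms \<zeta>)))"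

definition alpha_dpfm :: "('k \<Rightarrow> 'x \<Rightarrow> nat) \<Rightarrow> 'x set \<Rightarrow> real \<Rightarrow> real \<Rightarrow> 'k \<times> nat \<Rightarrow> real" where
  "alpha_dpfm H Ms gam eps = (\<lambda>(\<zeta>, ap). real (max (max ap (alpha_real H Ms \<zeta>)) (alpha_min gam eps)))"

definition expect :: "'a measure \<Rightarrow> ('a \<Rightarrow> real) \<Rightarrow> real" where
  "expect M X = integral\<^sup>L M X"

definition var :: "'a measure \<Rightarrow> ('a \<Rightarrow> real) \<Rightarrow> real" where
  "var M X = integral\<^sup>L M (\<lambda>\<omega>. (X \<omega> - expect M X)\<^sup>2)"

end

theory Submission
  imports Defs
begin



lemma geometric_le_lessThan:
  assumes "0 < p" "p < 1"
  shows "measure_pmf.prob (geometric_pmf p) {..<m} = 1 - (1-p)^m"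
proof -
  have "measure_pmf.prob (geometric_pmf p) {..<m} = (\<Sum>k<m. (1-p)^k * p)"
    using assms by (simp add: measure_measure_pmf_finite pmf_geometric)
  also have "\<dots> = 1 - (1-p)^m"
    by (induction m) (auto simp: algebra_simps)
  finally show ?thesis .
qed

lemma geom1_atMost:
  assumes "0 < p" "p < 1"
  shows "measure_pmf.prob (geom1_pmf p) {..m} = 1 - (1-p)^m"
proof -
  have "Suc -` {..m} = {..<m}" by auto
  then show ?thesis unfolding geom1_pmf_def using geometric_le_lessThan[OF assms]
    by (simp add: measure_map_pmf)
qed

lemma summable_sq_power:
  fixes q :: real assumes "0 \<le> q" "q < 1"
  shows "summable (\<lambda>n. (real n + 1)^2 * q^n)"
proof -
  define r where "r = sqrt q"
  have r: "0 \<le> r" "r < 1" using assms by (auto simp: r_def)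
  have rq: "r^n * r^n = q^n" for n
    using assms by (simp add: r_def flip: power_mult_distrib)
  have s: "summable (\<lambda>n. r^n * real n)"
    using geometric_sums_times_n[of r] r by (auto simp: sums_iff)
  then have "(\<lambda>n. r^n * real n) \<longlonglongrightarrow> 0" by (rule summable_LIMSEQ_zero)
  then have ev: "eventually (\<lambda>n. r^n * real n < 1) sequentially"
    by (rule order_tendstoD) simp
  have s2: "summable (\<lambda>n. (r^n * real n)^2)"
  proof (rule summable_comparison_test_ev[OF _ s])
    show "eventually (\<lambda>n. norm ((r^n * real n)^2) \<le> r^n * real n) sequentially"
      using ev
    proof eventually_elim
      case (elim n)
      have "0 \<le> r^n * real n" using r by simp
      then show ?case using elim by (simp add: power2_eq_square mult_left_le_one_le)
    qed
  qed
  have g: "summable (\<lambda>n. q^n)" using assms by (simp add: summable_geometric)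
  have "summable (\<lambda>n. 2 * (r^n * real n)^2 + 2 * q^n)"
    using s2 g by (intro summable_add summable_mult) auto
  then show ?thesis
  proof (rule summable_comparison_test_ev[rotated])
    show "eventually (\<lambda>n. norm ((real n + 1)^2 * q^n) \<le> 2 * (r^n * real n)^2 + 2 * q^n) sequentially"
    proof (intro always_eventually allI)
      fix n
      have e: "(r^n * real n)^2 = real n ^2 * q^n" using rq
        by (simp add: power2_eq_square algebra_simps)
      have "0 \<le> (real n - 1)^2" by simp
      then have "(real n + 1)^2 \<le> 2 * real n ^2 + 2" by (simp add: power2_eq_square algebra_simps)
      then have "(real n + 1)^2 * q^n \<le> (2 * real n ^2 + 2) * q^n"
        using assms by (intro mult_right_mono) auto
      then show "norm ((real n + 1)^2 * q^n) \<le> 2 * (r^n * real n)^2 + 2 * q^n"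
        unfolding e using assms by (simp add: algebra_simps)
    qed
  qed
qed

lemma geom1_sq_integrable:
  assumes "0 < p" "p < 1"
  shows "integrable (measure_pmf (geom1_pmf p)) (\<lambda>k. real k ^ 2)"
proof -
  have "summable (\<lambda>n. (real n + 1)^2 * (1-p)^n)"
    using assms by (intro summable_sq_power) auto
  then have "summable (\<lambda>n. (1 + real n)^2 * (1-p)^n)" by (simp add: add.commute)
  then have "summable (\<lambda>n. p * ((1 + real n)^2 * (1-p)^n))" by (rule summable_mult)
  then have "integrable (measure_pmf (geometric_pmf p)) (\<lambda>k. real (Suc k) ^ 2)"
    unfolding measure_pmf_eq_density using assms
    by (subst integrable_density)
       (auto simp: integrable_count_space_nat_iff mult_ac pmf_geometric)
  then show ?thesis unfolding geom1_pmf_def by simp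
qed


lemma amgm_sq:
  fixes u v t :: real assumes t: "0 < t"
  shows "\<bar>(u + v)^2 - u^2\<bar> \<le> t * u^2 + (1 + 1/t) * v^2"
proof -
  have "0 \<le> (t * \<bar>u\<bar> - \<bar>v\<bar>)^2" by simp
  then have "2 * t * (\<bar>u\<bar> * \<bar>v\<bar>) \<le> t^2 * u^2 + v^2"
    by (simp add: power2_eq_square algebra_simps)
  then have "2 * (\<bar>u\<bar> * \<bar>v\<bar>) \<le> (t^2 * u^2 + v^2) / t"
    using t by (simp add: field_simps)
  also have "\<dots> = t * u^2 + v^2 / t" using t by (simp add: field_simps power2_eq_square)
  finally have h: "2 * (\<bar>u\<bar> * \<bar>v\<bar>) \<le> t * u^2 + v^2 / t" .
  have "\<bar>(u + v)^2 - u^2\<bar> = \<bar>2 * u * v + v^2\<bar>" by (simp add: power2_eq_square algebra_simps)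
  also have "\<dots> \<le> 2 * (\<bar>u\<bar> * \<bar>v\<bar>) + v^2" by (simp add: abs_mult abs_triangle_ineq[THEN order_trans])
  also have "\<dots> \<le> t * u^2 + (1 + 1/t) * v^2" using h by (simp add: algebra_simps)
  finally show ?thesis .
qed


context prob_space begin

lemma var_lower:
  fixes X :: "'a \<Rightarrow> real" and m :: real
  assumes [measurable]: "X \<in> borel_measurable M" and sq: "integrable M (\<lambda>x. X x ^ 2)"
  shows "min (prob {x\<in>space M. X x \<le> m}) (prob {x\<in>space M. m + 1 \<le> X x}) / 4 \<le> var M X"
proof -
  have iX: "integrable M X" by (rule square_integrable_imp_integrable[OF assms(1) sq])
  define c where "c = expect M X"
  have eq: "(\<lambda>x. (X x - c)^2) = (\<lambda>x. X x ^ 2 - 2 * c * X x + c^2)"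
    by (auto simp: power2_eq_square algebra_simps)
  have ic: "integrable M (\<lambda>x. (X x - c)^2)" unfolding eq using sq iX by simp
  have v: "var M X = (\<integral>x. (X x - c)^2 \<partial>M)" unfolding var_def c_def by simp
  show ?thesis
  proof (cases "c \<le> m + 1/2")
    case True
    define S where "S = {x\<in>space M. m + 1 \<le> X x}"
    have S[measurable]: "S \<in> sets M" unfolding S_def by measurable
    have "(\<integral>x. indicator S x / 4 \<partial>M) \<le> (\<integral>x. (X x - c)^2 \<partial>M)"
    proof (rule integral_mono[OF _ ic])
      show "integrable M (\<lambda>x. indicator S x / 4 :: real)" by (intro integrable_divide integrable_real_indicator S) (simp add: less_top[symmetric])
      fix x assume "x \<in> space M"
      show "indicator S x / 4 \<le> (X x - c)^2"
      proof (cases "x \<in> S")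
        case True
        then have "1/2 \<le> X x - c" using \<open>c \<le> m + 1/2\<close> unfolding S_def by auto
        then have "(1/2)^2 \<le> (X x - c)^2" by (intro power_mono) auto
        then show ?thesis using True by (simp add: power2_eq_square)
      qed simp
    qed
    then have "prob S / 4 \<le> var M X" using v S by simp
    then show ?thesis unfolding S_def by linarith
  next
    case False
    define S where "S = {x\<in>space M. X x \<le> m}"
    have S[measurable]: "S \<in> sets M" unfolding S_def by measurable
    have "(\<integral>x. indicator S x / 4 \<partial>M) \<le> (\<integral>x. (X x - c)^2 \<partial>M)"
    proof (rule integral_mono[OF _ ic])
      show "integrable M (\<lambda>x. indicator S x / 4 :: real)" by (intro integrable_divide integrable_real_indicator S) (simp add: less_top[symmetric])
      fix x assume "x \<in> space M"
      show "indicator S x / 4 \<le> (X x - c)^2"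
      proof (cases "x \<in> S")
        case True
        then have "1/2 \<le> c - X x" using False unfolding S_def by auto
        then have "(1/2)^2 \<le> (c - X x)^2" by (intro power_mono) auto
        then show ?thesis using True by (simp add: power2_eq_square algebra_simps)
      qed simp
    qed
    then have "prob S / 4 \<le> var M X" using v S by simp
    then show ?thesis unfolding S_def by linarith
  qed
qed

lemma expect_lower:
  fixes X :: "'a \<Rightarrow> real" and m :: real
  assumes [measurable]: "X \<in> borel_measurable M" and iX: "integrable M X"
    and nn: "\<And>x. 0 \<le> X x" and m: "0 \<le> m"
  shows "prob {x\<in>space M. m + 1 \<le> X x} \<le> expect M X"
proof -
  define S where "S = {x\<in>space M. m + 1 \<le> X x}"
  have S[measurable]: "S \<in> sets M" unfolding S_def by measurable
  have "(\<integral>x. indicator S x \<partial>M) \<le> (\<integral>x. X x \<partial>M)"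
  proof (rule integral_mono[OF _ iX])
    show "integrable M (\<lambda>x. indicator S x :: real)" by (intro integrable_real_indicator S) (simp add: less_top[symmetric])
    fix x assume "x \<in> space M"
    show "indicator S x \<le> X x"
      using nn[of x] m by (cases "x \<in> S") (auto simp: S_def)
  qed
  then show ?thesis using S unfolding S_def expect_def by simp
qed

lemma var_perturb:
  fixes X D :: "'a \<Rightarrow> real" and a t :: real
  assumes [measurable]: "X \<in> borel_measurable M" "D \<in> borel_measurable M"
    and sq: "integrable M (\<lambda>x. X x ^ 2)"
    and Db: "\<And>x. \<bar>D x\<bar> \<le> a" and t: "0 < t"
  shows "\<bar>var M (\<lambda>x. X x + D x) - var M X\<bar>
           \<le> t * var M X + (1 + 1/t) * (2 * expect M (\<lambda>x. D x ^ 2) + 2 * (expect M D)^2)"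
proof -
  have iX: "integrable M X" by (rule square_integrable_imp_integrable[OF assms(1) sq])
  have iD: "integrable M D" using Db by (intro integrable_const_bound[where B=a] AE_I2) auto
  have iD2: "integrable M (\<lambda>x. D x ^ 2)"
  proof (rule integrable_const_bound[where B="a^2"])
    show "AE x in M. norm (D x ^ 2) \<le> a^2"
    proof (rule AE_I2)
      fix x
      have "\<bar>D x\<bar> ^ 2 \<le> a ^ 2" using Db[of x] by (intro power_mono) auto
      then show "norm (D x ^ 2) \<le> a^2" by simp
    qed
  qed simp
  define c where "c = expect M X"
  define d where "d = expect M D"
  have e: "expect M (\<lambda>x. X x + D x) = c + d"
    unfolding c_def d_def expect_def using iX iD by simp
  define Xc where "Xc x = X x - c" for x
  define Yc where "Yc x = D x - d" for x
  have iXc: "integrable M (\<lambda>x. Xc x ^ 2)"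
  proof -
    have eq: "(\<lambda>x. Xc x ^ 2) = (\<lambda>x. X x ^ 2 - 2 * c * X x + c^2)"
      by (auto simp: Xc_def power2_eq_square algebra_simps)
    show ?thesis unfolding eq using sq iX by simp
  qed
  have iYc: "integrable M (\<lambda>x. Yc x ^ 2)"
  proof -
    have eq: "(\<lambda>x. Yc x ^ 2) = (\<lambda>x. D x ^ 2 - 2 * d * D x + d^2)"
      by (auto simp: Yc_def power2_eq_square algebra_simps)
    show ?thesis unfolding eq using iD2 iD by simp
  qed
  have iXY: "integrable M (\<lambda>x. (Xc x + Yc x) ^ 2)"
  proof -
    have eq: "(\<lambda>x. (Xc x + Yc x) ^ 2) = (\<lambda>x. 2 * Xc x ^ 2 + 2 * Yc x ^ 2 - (Xc x - Yc x)^2)"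
      by (auto simp: power2_eq_square algebra_simps)
    have m1: "Xc \<in> borel_measurable M" "Yc \<in> borel_measurable M"
      unfolding Xc_def Yc_def by auto
    have "integrable M (\<lambda>x. (Xc x - Yc x)^2)"
    proof (rule Bochner_Integration.integrable_bound)
      show "integrable M (\<lambda>x. 2 * Xc x ^ 2 + 2 * Yc x ^ 2)" using iXc iYc by simp
      show "(\<lambda>x. (Xc x - Yc x)^2) \<in> borel_measurable M" using m1 by measurable
      show "AE x in M. norm ((Xc x - Yc x)^2) \<le> norm (2 * Xc x ^ 2 + 2 * Yc x ^ 2)"
      proof (intro AE_I2)
        fix x
        have "0 \<le> (Xc x + Yc x)^2" by simp
        then have h: "(Xc x - Yc x)^2 \<le> 2 * Xc x ^ 2 + 2 * Yc x ^ 2"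
          by (simp add: power2_eq_square algebra_simps)
        have "0 \<le> 2 * Xc x ^ 2 + 2 * Yc x ^ 2" by simp
        then show "norm ((Xc x - Yc x)^2) \<le> norm (2 * Xc x ^ 2 + 2 * Yc x ^ 2)"
          using h by simp
      qed
    qed
    then show ?thesis unfolding eq using iXc iYc by simp
  qed
  have v1: "var M (\<lambda>x. X x + D x) = (\<integral>x. (Xc x + Yc x)^2 \<partial>M)"
    unfolding var_def e Xc_def Yc_def by (simp add: algebra_simps)
  have v2: "var M X = (\<integral>x. Xc x ^ 2 \<partial>M)"
    unfolding var_def Xc_def c_def expect_def by simp
  have pw: "\<bar>(Xc x + Yc x)^2 - Xc x ^ 2\<bar> \<le> t * Xc x ^ 2 + (1 + 1/t) * Yc x ^ 2" for x
    by (rule amgm_sq[OF t])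
  have "\<bar>var M (\<lambda>x. X x + D x) - var M X\<bar> = \<bar>\<integral>x. (Xc x + Yc x)^2 - Xc x ^ 2 \<partial>M\<bar>"
    unfolding v1 v2 using iXY iXc by simp
  also have "\<dots> \<le> (\<integral>x. \<bar>(Xc x + Yc x)^2 - Xc x ^ 2\<bar> \<partial>M)"
    using integral_abs_bound[of M "\<lambda>x. (Xc x + Yc x)^2 - Xc x ^ 2"] by simp
  also have "\<dots> \<le> (\<integral>x. t * Xc x ^ 2 + (1 + 1/t) * Yc x ^ 2 \<partial>M)"
    using pw iXY iXc iYc by (intro integral_mono) auto
  also have "\<dots> = t * var M X + (1 + 1/t) * (\<integral>x. Yc x ^ 2 \<partial>M)"
    unfolding v2 using iXc iYc by simp
  also have "(\<integral>x. Yc x ^ 2 \<partial>M) \<le> 2 * expect M (\<lambda>x. D x ^ 2) + 2 * (expect M D)^2"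
  proof -
    have "(\<integral>x. Yc x ^ 2 \<partial>M) \<le> (\<integral>x. 2 * D x ^ 2 + 2 * d^2 \<partial>M)"
    proof (rule integral_mono[OF iYc])
      show "integrable M (\<lambda>x. 2 * D x ^ 2 + 2 * d^2)" using iD2 by simp
      fix x
      have "0 \<le> (D x + d)^2" by simp
      then show "Yc x ^ 2 \<le> 2 * D x ^ 2 + 2 * d^2"
        by (simp add: Yc_def power2_eq_square algebra_simps)
    qed
    also have "\<dots> = 2 * expect M (\<lambda>x. D x ^ 2) + 2 * (expect M D)^2"
      using iD2 by (simp add: expect_def d_def prob_space)
    finally show ?thesis .
  qed
  then have "t * var M X + (1 + 1/t) * (\<integral>x. Yc x ^ 2 \<partial>M)
      \<le> t * var M X + (1 + 1/t) * (2 * expect M (\<lambda>x. D x ^ 2) + 2 * (expect M D)^2)"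
    using t by (intro add_left_mono mult_left_mono) auto
  finally show ?thesis .
qed

end


context prob_space begin

lemma ratio_limits:
  fixes A :: "nat \<Rightarrow> 'a \<Rightarrow> real" and a c :: real
  assumes meas[measurable]: "\<And>k. A k \<in> borel_measurable M"
    and sq: "\<And>k. integrable M (\<lambda>x. A k x ^ 2)"
    and nn: "\<And>k x. 0 \<le> A k x"
    and a: "0 \<le> a"
    and tail: "(\<lambda>k. prob {x\<in>space M. A k x < a}) \<longlonglongrightarrow> 0"
    and c: "0 < c"
    and lb: "eventually (\<lambda>k. c \<le> expect M (A k) \<and> c \<le> var M (A k)) sequentially"
  shows "(\<lambda>k. expect M (\<lambda>x. max (A k x) a) / expect M (A k)) \<longlonglongrightarrow> 1
       \<and> (\<lambda>k. var M (\<lambda>x. max (A k x) a) / var M (A k)) \<longlonglongrightarrow> 1"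
proof -
  define S where "S k = {x\<in>space M. A k x < a}" for k
  define P where "P k = prob (S k)" for k
  define D where "D k x = max (A k x) a - A k x" for k x
  have S[measurable]: "S k \<in> sets M" for k unfolding S_def by measurable
  have Dm[measurable]: "D k \<in> borel_measurable M" for k unfolding D_def by measurable
  have Dabs: "\<bar>D k x\<bar> \<le> a" for k x
    using a nn[of k x] unfolding D_def by (auto simp: max_def)
  have Dle: "D k x \<le> a * indicator (S k) x" if "x \<in> space M" for k x
    using that a nn[of k x] unfolding D_def S_def by (auto simp: indicator_def max_def)
  have D0: "0 \<le> D k x" for k x unfolding D_def by simp
  have Dsq: "D k x ^ 2 \<le> a^2 * indicator (S k) x" if "x \<in> space M" for k x
  proof -
    have "D k x ^ 2 \<le> (a * indicator (S k) x) ^ 2"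
      using Dle[OF that] D0 by (intro power_mono) auto
    then show ?thesis by (cases "x \<in> S k") (simp_all add: power_mult_distrib)
  qed
  have iA: "integrable M (A k)" for k by (rule square_integrable_imp_integrable[OF meas sq])
  have iD: "integrable M (D k)" for k
    using Dabs by (intro integrable_const_bound[where B=a] AE_I2) auto
  have iS: "integrable M (indicator (S k) :: 'a \<Rightarrow> real)" for k
    by (intro integrable_real_indicator S) (simp add: less_top[symmetric])
  have ED: "expect M (D k) \<le> a * P k" for k
  proof -
    have "expect M (D k) \<le> (\<integral>x. a * indicator (S k) x \<partial>M)"
      unfolding expect_def using iD iS Dle by (intro integral_mono) auto
    then show ?thesis by (simp add: P_def)
  qed
  have ED0: "0 \<le> expect M (D k)" for k
    unfolding expect_def using D0 by simp
  have ED2: "expect M (\<lambda>x. D k x ^ 2) \<le> a^2 * P k" for k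
  proof -
    have iD2: "integrable M (\<lambda>x. D k x ^ 2)"
    proof (rule integrable_const_bound[where B="a^2"])
      show "AE x in M. norm (D k x ^ 2) \<le> a^2"
      proof (rule AE_I2)
        fix x assume "x \<in> space M"
        have "\<bar>D k x\<bar> ^ 2 \<le> a ^ 2" using Dabs[of k x] by (intro power_mono) auto
        then show "norm (D k x ^ 2) \<le> a^2" by simp
      qed
    qed simp
    have "expect M (\<lambda>x. D k x ^ 2) \<le> (\<integral>x. a^2 * indicator (S k) x \<partial>M)"
      unfolding expect_def using iD2 iS Dsq by (intro integral_mono) auto
    then show ?thesis by (simp add: P_def)
  qed
  have P01: "0 \<le> P k" "P k \<le> 1" for k unfolding P_def by auto
  have maxeq: "(\<lambda>x. max (A k x) a) = (\<lambda>x. A k x + D k x)" for k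
    unfolding D_def by auto
  have Eeq: "expect M (\<lambda>x. max (A k x) a) = expect M (A k) + expect M (D k)" for k
    unfolding maxeq expect_def using iA iD by simp
  have tailP: "P \<longlonglongrightarrow> 0" using tail unfolding P_def S_def .
  have E1: "(\<lambda>k. expect M (\<lambda>x. max (A k x) a) / expect M (A k) - 1) \<longlonglongrightarrow> 0"
  proof (rule Lim_null_comparison)
    show "eventually (\<lambda>k. norm (expect M (\<lambda>x. max (A k x) a) / expect M (A k) - 1) \<le> a * P k / c) sequentially"
      using lb
    proof eventually_elim
      case (elim k)
      then have pos: "0 < expect M (A k)" using c by linarith
      have eq: "expect M (\<lambda>x. max (A k x) a) / expect M (A k) - 1 = expect M (D k) / expect M (A k)"
        using pos by (simp add: Eeq field_simps)
      have "\<bar>expect M (\<lambda>x. max (A k x) a) / expect M (A k) - 1\<bar> = expect M (D k) / expect M (A k)"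
        unfolding eq using pos ED0[of k] by simp
      also have "\<dots> \<le> a * P k / expect M (A k)"
        using pos ED[of k] by (intro divide_right_mono) auto
      also have "\<dots> \<le> a * P k / c"
        using pos elim c a P01[of k] by (intro divide_left_mono) auto
      finally show ?case by simp
    qed
    show "(\<lambda>k. a * P k / c) \<longlonglongrightarrow> 0"
      using tendsto_divide[OF tendsto_mult[OF tendsto_const tailP] tendsto_const, of c] c by simp
  qed
  have Vb: "\<bar>var M (\<lambda>x. max (A k x) a) / var M (A k) - 1\<bar> \<le> t + (1 + 1/t) * (4 * a^2 * P k) / c"
    if t: "0 < t" and vk: "c \<le> var M (A k)" for k t
  proof -
    have pos: "0 < var M (A k)" using vk c by linarith
    have "\<bar>var M (\<lambda>x. A k x + D k x) - var M (A k)\<bar>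
           \<le> t * var M (A k) + (1 + 1/t) * (2 * expect M (\<lambda>x. D k x ^ 2) + 2 * (expect M (D k))^2)"
      by (rule var_perturb[OF meas[of k] Dm[of k] sq[of k] Dabs t])
    also have "2 * expect M (\<lambda>x. D k x ^ 2) + 2 * (expect M (D k))^2 \<le> 4 * a^2 * P k"
    proof -
      have "(expect M (D k))^2 \<le> (a * P k)^2" using ED[of k] ED0[of k] by (intro power_mono) auto
      also have "(a * P k)^2 \<le> a^2 * P k"
      proof -
        have "P k * P k \<le> P k" using P01[of k] by (intro mult_left_le_one_le) auto
        then have "a^2 * (P k * P k) \<le> a^2 * P k" by (intro mult_left_mono) auto
        then show ?thesis by (simp add: power2_eq_square algebra_simps)
      qed
      finally show ?thesis using ED2[of k] by simp
    qed
    then have "t * var M (A k) + (1 + 1/t) * (2 * expect M (\<lambda>x. D k x ^ 2) + 2 * (expect M (D k))^2)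
        \<le> t * var M (A k) + (1 + 1/t) * (4 * a^2 * P k)"
      using t by (intro add_left_mono mult_left_mono) auto
    finally have h: "\<bar>var M (\<lambda>x. max (A k x) a) - var M (A k)\<bar> \<le> t * var M (A k) + (1 + 1/t) * (4 * a^2 * P k)"
      unfolding maxeq .
    have "\<bar>var M (\<lambda>x. max (A k x) a) / var M (A k) - 1\<bar> = \<bar>var M (\<lambda>x. max (A k x) a) - var M (A k)\<bar> / var M (A k)"
      using pos by (simp add: field_simps)
    also have "\<dots> \<le> (t * var M (A k) + (1 + 1/t) * (4 * a^2 * P k)) / var M (A k)"
      using h pos by (intro divide_right_mono) auto
    also have "\<dots> = t + (1 + 1/t) * (4 * a^2 * P k) / var M (A k)"
      using pos by (simp add: field_simps)
    also have "(1 + 1/t) * (4 * a^2 * P k) / var M (A k) \<le> (1 + 1/t) * (4 * a^2 * P k) / c"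
      using pos vk c t P01[of k] by (intro divide_left_mono) auto
    finally show ?thesis by simp
  qed
  have V1: "(\<lambda>k. var M (\<lambda>x. max (A k x) a) / var M (A k)) \<longlonglongrightarrow> 1"
  proof (rule tendstoI)
    fix e :: real assume e: "0 < e"
    define t where "t = e / 2"
    have t: "0 < t" using e by (simp add: t_def)
    define K where "K = (1 + 1/t) * 4 * a^2 / c + 1"
    have "0 \<le> (1 + 1/t) * 4 * a^2 / c" using t c by simp
    then have K: "0 < K" by (simp add: K_def)
    have "eventually (\<lambda>k. P k < t / K) sequentially"
      using order_tendstoD(2)[OF tailP] t K by simp
    then show "eventually (\<lambda>k. dist (var M (\<lambda>x. max (A k x) a) / var M (A k)) 1 < e) sequentially"
      using lb
    proof eventually_elim
      case (elim k)
      have "(1 + 1/t) * (4 * a^2 * P k) / c = ((1 + 1/t) * 4 * a^2 / c) * P k" by simp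
      also have "\<dots> \<le> K * P k" using P01[of k] by (intro mult_right_mono) (auto simp: K_def)
      also have "\<dots> < t" using elim K by (simp add: field_simps)
      finally have "(1 + 1/t) * (4 * a^2 * P k) / c < t" .
      then show ?case using Vb[OF t, of k] elim by (simp add: dist_real_def t_def)
    qed
  qed
  have "(\<lambda>k. (expect M (\<lambda>x. max (A k x) a) / expect M (A k) - 1) + 1) \<longlonglongrightarrow> 0 + 1"
    by (intro tendsto_add E1 tendsto_const)
  then show ?thesis using V1 by simp
qed

end



lemma alpha_p_sq_integrable:
  assumes "0 < p" "p < 1" "n > 0"
  shows "integrable (measure_pmf (alpha_p_pmf p n)) (\<lambda>a. real a ^ 2)"
proof -
  define Q where "Q = Pi_pmf {..<n} 0 (\<lambda>_. geom1_pmf p)"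
  have comp: "integrable (measure_pmf Q) (\<lambda>f. real (f j) ^ 2)" if "j < n" for j
  proof -
    have "map_pmf (\<lambda>f. f j) Q = geom1_pmf p"
      unfolding Q_def using that by (subst Pi_pmf_component) auto
    then have "integrable (measure_pmf (map_pmf (\<lambda>f. f j) Q)) (\<lambda>k. real k ^ 2)"
      using geom1_sq_integrable[OF assms(1,2)] by simp
    then show ?thesis by simp
  qed
  have s: "integrable (measure_pmf Q) (\<lambda>f. \<Sum>j<n. real (f j) ^ 2)"
    using comp by (intro Bochner_Integration.integrable_sum) auto
  have "integrable (measure_pmf Q) (\<lambda>f. real (Max (f ` {..<n})) ^ 2)"
  proof (rule Bochner_Integration.integrable_bound[OF s])
    show "(\<lambda>f. real (Max (f ` {..<n})) ^ 2) \<in> borel_measurable (measure_pmf Q)" by simp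
    show "AE f in measure_pmf Q. norm (real (Max (f ` {..<n})) ^ 2) \<le> norm (\<Sum>j<n. real (f j) ^ 2)"
    proof (rule AE_I2)
      fix f :: "nat \<Rightarrow> nat"
      have "Max (f ` {..<n}) \<in> f ` {..<n}" using assms(3) by (intro Max_in) auto
      then obtain j where j: "j < n" "Max (f ` {..<n}) = f j" by auto
      have "real (f j) ^ 2 \<le> (\<Sum>j<n. real (f j) ^ 2)"
        using j(1) by (intro member_le_sum) auto
      moreover have "0 \<le> (\<Sum>j<n. real (f j) ^ 2)" by (intro sum_nonneg) auto
      ultimately show "norm (real (Max (f ` {..<n})) ^ 2) \<le> norm (\<Sum>j<n. real (f j) ^ 2)"
        using j by simp
    qed
  qed
  then show ?thesis unfolding alpha_p_pmf_def Q_def by simp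
qed

lemma measure_pair_pmf_Times:
  assumes "prob_space K" "S \<in> sets K"
  shows "measure (K \<Otimes>\<^sub>M measure_pmf N) (S \<times> T) = measure K S * measure_pmf.prob N T"
  using assms by (simp add: measure_def measure_pmf.emeasure_pair_measure_Times enn2real_mult)

lemma integrable_pair_fst:
  fixes f :: "'a \<Rightarrow> real"
  assumes "integrable K f" "f \<in> borel_measurable K"
  shows "integrable (K \<Otimes>\<^sub>M measure_pmf N) (\<lambda>\<omega>. f (fst \<omega>))"
proof -
  have "distr (K \<Otimes>\<^sub>M measure_pmf N) K fst = K"
    by (rule prob_space.distr_pair_fst) (rule prob_space_measure_pmf)
  then have "integrable (distr (K \<Otimes>\<^sub>M measure_pmf N) K fst) f" using assms by simp
  then show ?thesis using assms by (subst (asm) integrable_distr_eq) auto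
qed

lemma distr_pair_snd_pmf:
  assumes "prob_space K"
  shows "distr (K \<Otimes>\<^sub>M measure_pmf N) (measure_pmf N) snd = measure_pmf N"
proof (intro measure_eqI)
  fix A assume A: "A \<in> sets (distr (K \<Otimes>\<^sub>M measure_pmf N) (measure_pmf N) snd)"
  have "emeasure (distr (K \<Otimes>\<^sub>M measure_pmf N) (measure_pmf N) snd) A
        = emeasure (K \<Otimes>\<^sub>M measure_pmf N) (space K \<times> A)"
    using A by (auto simp add: emeasure_distr space_pair_measure intro!: arg_cong2[where f=emeasure])
  then show "emeasure (distr (K \<Otimes>\<^sub>M measure_pmf N) (measure_pmf N) snd) A = emeasure (measure_pmf N) A"
    using assms by (simp add: measure_pmf.emeasure_pair_measure_Times prob_space.emeasure_space_1)
qed simp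

lemma integrable_pair_snd:
  fixes g :: "'b \<Rightarrow> real"
  assumes "prob_space K" "integrable (measure_pmf N) g"
  shows "integrable (K \<Otimes>\<^sub>M measure_pmf N) (\<lambda>\<omega>. g (snd \<omega>))"
proof -
  have "integrable (distr (K \<Otimes>\<^sub>M measure_pmf N) (measure_pmf N) snd) g"
    by (subst distr_pair_snd_pmf[OF assms(1)]) (rule assms(2))
  then show ?thesis by (subst (asm) integrable_distr_eq) auto
qed

locale dpfm_setup =
  fixes K :: "'k measure" and H :: "'k \<Rightarrow> 'x \<Rightarrow> nat" and p :: real
  assumes K: "prob_space K" and p: "0 < p" "p < 1"
    and indep: "prob_space.indep_vars K (\<lambda>_. count_space UNIV) (\<lambda>x \<zeta>. H \<zeta> x) UNIV"
    and dist: "\<And>x. distr K (count_space UNIV) (\<lambda>\<zeta>. H \<zeta> x) = measure_pmf (geom1_pmf p)"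
begin

interpretation K: prob_space K by (rule K)

lemma Hmeas[measurable]: "(\<lambda>\<zeta>. H \<zeta> x) \<in> measurable K (count_space UNIV)"
  using indep unfolding K.indep_vars_def2 by auto

lemma Hprob: "measure K {\<zeta>\<in>space K. H \<zeta> x \<le> m} = 1 - (1-p)^m"
proof -
  have "measure (distr K (count_space UNIV) (\<lambda>\<zeta>. H \<zeta> x)) {..m} = measure K ((\<lambda>\<zeta>. H \<zeta> x) -` {..m} \<inter> space K)"
    by (rule measure_distr) auto
  moreover have "(\<lambda>\<zeta>. H \<zeta> x) -` {..m} \<inter> space K = {\<zeta>\<in>space K. H \<zeta> x \<le> m}" by auto
  ultimately show ?thesis using geom1_atMost[OF p] dist[of x] by simp
qed

lemma Hsq_int: "integrable K (\<lambda>\<zeta>. real (H \<zeta> x) ^ 2)"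
proof -
  have "integrable (distr K (count_space UNIV) (\<lambda>\<zeta>. H \<zeta> x)) (\<lambda>k. real k ^ 2)"
    using geom1_sq_integrable[OF p] dist[of x] by simp
  then show ?thesis by (subst (asm) integrable_distr_eq) auto
qed

lemma alpha_real_le_iff:
  assumes "finite M" "M \<noteq> {}"
  shows "alpha_real H M \<zeta> \<le> m \<longleftrightarrow> (\<forall>x\<in>M. H \<zeta> x \<le> m)"
  using assms unfolding alpha_real_def by auto

lemma alpha_real_set:
  assumes "finite M" "M \<noteq> {}"
  shows "{\<zeta>\<in>space K. alpha_real H M \<zeta> \<le> m} = (\<Inter>x\<in>M. (\<lambda>\<zeta>. H \<zeta> x) -` {..m} \<inter> space K)"
  using assms by (auto simp: alpha_real_le_iff)

lemma alpha_real_set_sets: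
  assumes "finite M" "M \<noteq> {}"
  shows "{\<zeta>\<in>space K. alpha_real H M \<zeta> \<le> m} \<in> sets K"
  unfolding alpha_real_set[OF assms] using assms
  by (intro sets.finite_INT) (auto intro: measurable_sets[OF Hmeas])

lemma alpha_real_prob:
  assumes "finite M" "M \<noteq> {}"
  shows "measure K {\<zeta>\<in>space K. alpha_real H M \<zeta> \<le> m} = (1 - (1-p)^m) ^ card M"
proof -
  have "measure K {\<zeta>\<in>space K. alpha_real H M \<zeta> \<le> m}
      = (\<Prod>x\<in>M. measure K ((\<lambda>\<zeta>. H \<zeta> x) -` {..m} \<inter> space K))"
    unfolding alpha_real_set[OF assms]
    by (rule K.indep_varsD[OF indep]) (use assms in auto)
  also have "\<dots> = (\<Prod>x\<in>M. 1 - (1-p)^m)"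
  proof (rule prod.cong[OF refl])
    fix x
    have "(\<lambda>\<zeta>. H \<zeta> x) -` {..m} \<inter> space K = {\<zeta>\<in>space K. H \<zeta> x \<le> m}" by auto
    then show "measure K ((\<lambda>\<zeta>. H \<zeta> x) -` {..m} \<inter> space K) = 1 - (1-p)^m"
      using Hprob by simp
  qed
  finally show ?thesis by simp
qed

lemma R_eq:
  assumes "finite M" "M \<noteq> {}"
  shows "real (alpha_real H M \<zeta>) = Max ((\<lambda>x. real (H \<zeta> x)) ` M)"
  unfolding alpha_real_def using assms
  by (subst mono_Max_commute[where f=real]) (auto simp: mono_def image_image)

lemma R_meas:
  assumes "finite M"
  shows "(\<lambda>\<zeta>. real (alpha_real H M \<zeta>)) \<in> borel_measurable K"
proof (cases "M = {}")
  case True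
  then show ?thesis by (simp add: alpha_real_def)
next
  case False
  have "(\<lambda>\<zeta>. Max ((\<lambda>x. real (H \<zeta> x)) ` M)) \<in> borel_measurable K"
    using assms by measurable
  then show ?thesis by (simp add: R_eq[OF assms False])
qed

lemma R_sq_int:
  assumes "finite M"
  shows "integrable K (\<lambda>\<zeta>. real (alpha_real H M \<zeta>) ^ 2)"
proof (cases "M = {}")
  case True
  then show ?thesis by (simp add: alpha_real_def)
next
  case False
  have s: "integrable K (\<lambda>\<zeta>. \<Sum>x\<in>M. real (H \<zeta> x) ^ 2)"
    using Hsq_int by (intro Bochner_Integration.integrable_sum) auto
  show ?thesis
  proof (rule Bochner_Integration.integrable_bound[OF s])
    show "(\<lambda>\<zeta>. real (alpha_real H M \<zeta>) ^ 2) \<in> borel_measurable K"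
      using R_meas[OF assms] by measurable
    show "AE \<zeta> in K. norm (real (alpha_real H M \<zeta>) ^ 2) \<le> norm (\<Sum>x\<in>M. real (H \<zeta> x) ^ 2)"
    proof (rule AE_I2)
      fix \<zeta>
      have "alpha_real H M \<zeta> \<in> H \<zeta> ` M" unfolding alpha_real_def using assms False by (intro Max_in) auto
      then obtain x where x: "x \<in> M" "alpha_real H M \<zeta> = H \<zeta> x" by auto
      have "real (H \<zeta> x) ^ 2 \<le> (\<Sum>x\<in>M. real (H \<zeta> x) ^ 2)"
        using x(1) assms by (intro member_le_sum) auto
      moreover have "0 \<le> (\<Sum>x\<in>M. real (H \<zeta> x) ^ 2)" by (intro sum_nonneg) auto
      ultimately show "norm (real (alpha_real H M \<zeta>) ^ 2) \<le> norm (\<Sum>x\<in>M. real (H \<zeta> x) ^ 2)"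
        using x by simp
    qed
  qed
qed

end



lemma choose_m:
  fixes q :: real and n :: nat
  assumes q: "0 < q" "q < 1" and n: "1 \<le> n"
  shows "\<exists>m. q^m * (2 * real n) \<le> 1 \<and> q / 2 < q^m * real n \<and> (\<forall>M0. 1 < q^M0 * (2 * real n) \<longrightarrow> M0 \<le> m)"
proof -
  define P where "P m \<longleftrightarrow> q^m * (2 * real n) \<le> 1" for m
  obtain m0 where "q^m0 < 1 / (2 * real n)"
    using real_arch_pow_inv[of "1 / (2 * real n)" q] q n by auto
  then have "P m0" using n by (simp add: P_def field_simps)
  define m where "m = (LEAST m. P m)"
  have Pm: "P m" unfolding m_def by (rule LeastI[of P m0]) (rule \<open>P m0\<close>)
  have m0: "m \<noteq> 0"
  proof
    assume "m = 0" then show False using Pm n by (simp add: P_def)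
  qed
  have "\<not> P (m - 1)" unfolding m_def
    by (rule not_less_Least) (use m0 in \<open>simp add: m_def[symmetric]\<close>)
  then have h: "1 < q^(m-1) * (2 * real n)" by (simp add: P_def)
  have qm: "q^m = q * q^(m-1)" using m0 by (cases m) auto
  have "q / 2 < q^m * real n"
  proof -
    have "q * 1 < q * (q^(m-1) * (2 * real n))" using h q by (intro mult_strict_left_mono) auto
    then show ?thesis unfolding qm by (simp add: algebra_simps)
  qed
  moreover have "M0 \<le> m" if "1 < q^M0 * (2 * real n)" for M0
  proof (rule ccontr)
    assume "\<not> M0 \<le> m"
    then have "q^M0 \<le> q^m" using q by (intro power_decreasing) auto
    then have "q^M0 * (2 * real n) \<le> q^m * (2 * real n)" by (intro mult_right_mono) auto
    then show False using Pm that by (simp add: P_def)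
  qed
  ultimately show ?thesis using Pm unfolding P_def by blast
qed

lemma pow_lower:
  fixes x :: real assumes "0 \<le> x" "x \<le> 1" "real n * x \<le> 1/2"
  shows "1/2 \<le> (1 - x)^n"
proof -
  have "1 + real n * (- x) \<le> (1 + (- x))^n" using assms by (intro Bernoulli_inequality) auto
  then show ?thesis using assms by simp
qed

lemma pow_upper:
  fixes x q :: real assumes "0 \<le> x" "x \<le> 1" "q / 2 < real n * x"
  shows "(1 - x)^n \<le> exp (- q / 2)"
proof -
  have "(1 - x)^n \<le> exp (- x) ^ n" using assms exp_minus_ge[of x] by (intro power_mono) auto
  also have "\<dots> = exp (real n * (- x))" by (rule exp_of_nat_mult[symmetric])
  also have "\<dots> \<le> exp (- q / 2)" using assms by simp
  finally show ?thesis .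
qed




theorem lemma4p5:
  fixes K :: "'k measure" and H :: "'k \<Rightarrow> 'x \<Rightarrow> nat"
    and gam eps :: real and Ms :: "nat \<Rightarrow> 'x set"
  assumes "prob_space K"
    and "gam > 0" and "eps > 0"
    and "prob_space.indep_vars K (\<lambda>_. count_space UNIV) (\<lambda>x \<zeta>. H \<zeta> x) UNIV"
    and "\<forall>x. distr K (count_space UNIV) (\<lambda>\<zeta>. H \<zeta> x) = measure_pmf (geom1_pmf (gam / (1 + gam)))"
    and "\<forall>k. finite (Ms k)"
    and "filterlim (\<lambda>k. card (Ms k)) at_top sequentially"
  shows "((\<lambda>k. expect (dpfm_space K gam eps) (alpha_dpfm H (Ms k) gam eps)
              / expect (dpfm_space K gam eps) (alpha_hat H (Ms k))) \<longlonglongrightarrow> 1)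
       \<and> ((\<lambda>k. var (dpfm_space K gam eps) (alpha_dpfm H (Ms k) gam eps)
              / var (dpfm_space K gam eps) (alpha_hat H (Ms k))) \<longlonglongrightarrow> 1)"
proof -
  define p where "p = gam / (1 + gam)"
  define q where "q = 1 - p"
  have p: "0 < p" "p < 1" using assms(2) by (auto simp: p_def field_simps)
  have q: "0 < q" "q < 1" unfolding q_def using p by linarith+
  interpret S: dpfm_setup K H p
  proof (rule dpfm_setup.intro)
    show "prob_space K" by (rule assms(1))
    show "0 < p" by (rule p(1))
    show "p < 1" by (rule p(2))
    show "prob_space.indep_vars K (\<lambda>_. count_space UNIV) (\<lambda>x \<zeta>. H \<zeta> x) UNIV" by (rule assms(4))
    show "\<And>x. distr K (count_space UNIV) (\<lambda>\<zeta>. H \<zeta> x) = measure_pmf (geom1_pmf p)"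
      using assms(5) unfolding p_def by blast
  qed
  interpret K: prob_space K by (rule assms(1))
  define np where "np = n_p eps"
  have np: "np > 0"
  proof -
    have "exp eps > 1" using assms(3) by simp
    then have "0 < 1 / (exp eps - 1)" by simp
    then show ?thesis unfolding np_def n_p_def by simp
  qed
  define am where "am = alpha_min gam eps"
  define N where "N = alpha_p_pmf p np"
  define P where "P = K \<Otimes>\<^sub>M measure_pmf N"
  have Pdef: "dpfm_space K gam eps = P"
    unfolding P_def N_def dpfm_space_def p_def np_def ..
  interpret P: prob_space P unfolding P_def
    by (intro prob_space_pair assms(1) prob_space_measure_pmf)
  have spP: "space P = space K \<times> UNIV" unfolding P_def by (simp add: space_pair_measure)
  define A where "A k = alpha_hat H (Ms k)" for k
  define R where "R k \<zeta> = real (alpha_real H (Ms k) \<zeta>)" for k \<zeta>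
  have Aeq: "A k = (\<lambda>\<omega>. max (real (snd \<omega>)) (R k (fst \<omega>)))" for k
    by (rule ext) (simp add: A_def alpha_hat_def R_def case_prod_beta of_nat_max)
  have Deq: "alpha_dpfm H (Ms k) gam eps = (\<lambda>\<omega>. max (A k \<omega>) (real am))" for k
    by (rule ext) (simp add: A_def alpha_hat_def alpha_dpfm_def am_def case_prod_beta of_nat_max)
  have Rm[measurable]: "R k \<in> borel_measurable K" for k
    unfolding R_def by (rule S.R_meas[OF assms(6)[rule_format]])
  have snd_m[measurable]: "(\<lambda>\<omega>. real (snd \<omega>)) \<in> borel_measurable P"
    unfolding P_def by (rule measurable_compose[OF measurable_snd]) (simp add: measurable_pmf_measure1)
  have fst_m[measurable]: "(\<lambda>\<omega>. R k (fst \<omega>)) \<in> borel_measurable P" for k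
    unfolding P_def by (rule measurable_compose[OF measurable_fst Rm])
  have Am[measurable]: "A k \<in> borel_measurable P" for k
    unfolding Aeq by measurable
  have Asq: "integrable P (\<lambda>\<omega>. A k \<omega> ^ 2)" for k
  proof -
    have i1: "integrable P (\<lambda>\<omega>. R k (fst \<omega>) ^ 2)"
      unfolding P_def using S.R_sq_int[of "Ms k"] assms(6)
      by (intro integrable_pair_fst) (auto simp: R_def)
    have i2: "integrable P (\<lambda>\<omega>. real (snd \<omega>) ^ 2)"
      unfolding P_def N_def using alpha_p_sq_integrable[OF p np]
      by (intro integrable_pair_snd assms(1))
    have s: "integrable P (\<lambda>\<omega>. real (snd \<omega>) ^ 2 + R k (fst \<omega>) ^ 2)"
      using i1 i2 by simp
    show ?thesis
    proof (rule Bochner_Integration.integrable_bound[OF s])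
      show "(\<lambda>\<omega>. A k \<omega> ^ 2) \<in> borel_measurable P" by measurable
      show "AE \<omega> in P. norm (A k \<omega> ^ 2) \<le> norm (real (snd \<omega>) ^ 2 + R k (fst \<omega>) ^ 2)"
      proof (rule AE_I2)
        fix \<omega>
        have "A k \<omega> ^ 2 \<le> real (snd \<omega>) ^ 2 + R k (fst \<omega>) ^ 2"
          unfolding Aeq R_def by (auto simp: max_def)
        then show "norm (A k \<omega> ^ 2) \<le> norm (real (snd \<omega>) ^ 2 + R k (fst \<omega>) ^ 2)" by simp
      qed
    qed
  qed
  have Ann: "0 \<le> A k \<omega>" for k \<omega> unfolding A_def alpha_hat_def by (simp add: case_prod_beta)
  have ev_ne: "eventually (\<lambda>k. 1 \<le> card (Ms k)) sequentially"
    using assms(7) by (simp add: filterlim_at_top)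
  have card_ne: "Ms k \<noteq> {}" if "1 \<le> card (Ms k)" for k using that by auto
  have Pset: "{\<omega>\<in>space P. A k \<omega> \<le> real m} = {\<zeta>\<in>space K. alpha_real H (Ms k) \<zeta> \<le> m} \<times> {..m}" for k m
    unfolding spP Aeq by (auto simp: R_def)
  have Pprob: "P.prob {\<omega>\<in>space P. A k \<omega> \<le> real m}
     = (1 - q^m) ^ card (Ms k) * measure_pmf.prob N {..m}" if "1 \<le> card (Ms k)" for k m
    unfolding Pset unfolding P_def
    using measure_pair_pmf_Times[OF assms(1) S.alpha_real_set_sets[OF assms(6)[rule_format] card_ne[OF that]]]
      S.alpha_real_prob[OF assms(6)[rule_format] card_ne[OF that]] by (simp add: q_def)
  have tail: "(\<lambda>k. P.prob {\<omega>\<in>space P. A k \<omega> < real am}) \<longlonglongrightarrow> 0"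
  proof (rule Lim_null_comparison)
    show "eventually (\<lambda>k. norm (P.prob {\<omega>\<in>space P. A k \<omega> < real am}) \<le> (1 - q^am) ^ card (Ms k)) sequentially"
      using ev_ne
    proof eventually_elim
      case (elim k)
      have "P.prob {\<omega>\<in>space P. A k \<omega> < real am} \<le> P.prob {\<omega>\<in>space P. A k \<omega> \<le> real am}"
        by (intro P.finite_measure_mono) auto
      also have "\<dots> \<le> (1 - q^am) ^ card (Ms k)"
      proof -
        have "q^am \<le> 1" using q by (simp add: power_le_one)
        then have "0 \<le> (1 - q^am) ^ card (Ms k)" by simp
        then show ?thesis unfolding Pprob[OF elim, of am]
          by (rule mult_left_le[OF measure_pmf.prob_le_1])
      qed
      finally show ?case by simp
    qed
    have "(\<lambda>n. (1 - q^am) ^ n) \<longlonglongrightarrow> 0"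
    proof (rule LIMSEQ_power_zero)
      have "0 < q^am" "q^am \<le> 1" using q by (simp_all add: power_le_one)
      then show "norm (1 - q^am) < 1" by simp
    qed
    then show "(\<lambda>k. (1 - q^am) ^ card (Ms k)) \<longlonglongrightarrow> 0"
      by (rule filterlim_compose[OF _ assms(7)])
  qed
  define \<delta> where "\<delta> = min (1/4) (1 - exp (- q / 2))"
  have \<delta>: "0 < \<delta>" using q by (simp add: \<delta>_def)
  have "(\<lambda>m. measure_pmf.prob N {..m}) \<longlonglongrightarrow> measure_pmf.prob N (\<Union> (range (\<lambda>m. {..m})))"
    by (rule measure_pmf.finite_Lim_measure_incseq) (auto simp: incseq_def)
  moreover have "\<Union> (range (\<lambda>m::nat. {..m})) = UNIV" by auto
  ultimately have "(\<lambda>m. measure_pmf.prob N {..m}) \<longlonglongrightarrow> 1" by simp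
  then have "eventually (\<lambda>m. 1/2 < measure_pmf.prob N {..m}) sequentially"
    by (rule order_tendstoD) simp
  then obtain M0 where M0: "\<And>m. M0 \<le> m \<Longrightarrow> 1/2 < measure_pmf.prob N {..m}"
    by (auto simp: eventually_sequentially)
  define B where "B = nat \<lceil>1 / (2 * q^M0)\<rceil> + 1"
  have ev_B: "eventually (\<lambda>k. B \<le> card (Ms k)) sequentially"
    using assms(7) by (simp add: filterlim_at_top)
  have lb: "eventually (\<lambda>k. \<delta>/4 \<le> expect P (A k) \<and> \<delta>/4 \<le> var P (A k)) sequentially"
    using ev_B ev_ne
  proof eventually_elim
    case (elim k)
    define n where "n = card (Ms k)"
    have n1: "1 \<le> n" using elim by (simp add: n_def)
    have "1 / (2 * q^M0) < real B" unfolding B_def by linarith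
    then have "1 / (2 * q^M0) < real n" using elim unfolding n_def by linarith
    then have big: "1 < q^M0 * (2 * real n)" using q by (simp add: field_simps)
    obtain m where m1: "q^m * (2 * real n) \<le> 1" and m2: "q / 2 < q^m * real n"
      and m3: "\<And>M0. 1 < q^M0 * (2 * real n) \<Longrightarrow> M0 \<le> m"
      using choose_m[OF q n1] by blast
    have "M0 \<le> m" using m3[OF big] .
    then have Nm: "1/2 < measure_pmf.prob N {..m}" by (rule M0)
    have x: "0 \<le> q^m" "q^m \<le> 1" using q by (auto simp: power_le_one)
    have lo: "1/2 \<le> (1 - q^m)^n"
      using x m1 by (intro pow_lower) (auto simp: field_simps)
    have up: "(1 - q^m)^n \<le> exp (- q / 2)"
      using x m2 by (intro pow_upper) (auto simp: field_simps)
    define Pm where "Pm = P.prob {\<omega>\<in>space P. A k \<omega> \<le> real m}"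
    have Pm: "Pm = (1 - q^m)^n * measure_pmf.prob N {..m}"
      unfolding Pm_def n_def by (rule Pprob[OF elim(2)])
    have Pm_lo: "1/4 \<le> Pm"
    proof -
      have "(1/2) * (1/2) \<le> (1 - q^m)^n * measure_pmf.prob N {..m}"
        using lo Nm by (intro mult_mono) auto
      then show ?thesis unfolding Pm by simp
    qed
    have Pm_up: "Pm \<le> exp (- q / 2)"
    proof -
      have "(1 - q^m)^n * measure_pmf.prob N {..m} \<le> exp (- q / 2) * 1"
        using up x by (intro mult_mono) (auto simp: measure_pmf.prob_le_1)
      then show ?thesis unfolding Pm by simp
    qed
    have compl: "{\<omega>\<in>space P. real m + 1 \<le> A k \<omega>} = space P - {\<omega>\<in>space P. A k \<omega> \<le> real m}"
    proof -
      have "real m + 1 \<le> A k \<omega> \<longleftrightarrow> \<not> A k \<omega> \<le> real m" for \<omega>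
      proof -
        obtain X :: nat where X: "A k \<omega> = real X"
          unfolding A_def alpha_hat_def by (simp add: case_prod_beta)
        have "real m + 1 = real (Suc m)" by simp
        then show ?thesis unfolding X by (simp only: of_nat_le_iff) auto
      qed
      then show ?thesis by auto
    qed
    have Pc: "P.prob {\<omega>\<in>space P. real m + 1 \<le> A k \<omega>} = 1 - Pm"
      unfolding compl Pm_def by (rule P.prob_compl) measurable
    have v0: "min Pm (1 - Pm) / 4 \<le> var P (A k)"
      using P.var_lower[OF Am[of k] Asq[of k], of "real m"] unfolding Pc Pm_def by simp
    have d1: "\<delta> \<le> min Pm (1 - Pm)" using Pm_lo Pm_up unfolding \<delta>_def by auto
    have v: "\<delta>/4 \<le> var P (A k)"
      using order_trans[OF divide_right_mono[OF d1, of 4] v0] by simp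
    have iA: "integrable P (A k)" by (rule P.square_integrable_imp_integrable[OF Am[of k] Asq[of k]])
    have "1 - Pm \<le> expect P (A k)"
      using P.expect_lower[OF Am[of k] iA Ann[of k], of "real m"] unfolding Pc by simp
    moreover have "\<delta> \<le> 1 - Pm" using Pm_up unfolding \<delta>_def by auto
    ultimately have "\<delta>/4 \<le> expect P (A k)" using \<delta> by linarith
    then show ?case using v by simp
  qed
  have "0 \<le> real am" by simp
  from P.ratio_limits[OF Am Asq Ann this tail _ lb] \<delta>
  have main: "(\<lambda>k. expect P (\<lambda>x. max (A k x) (real am)) / expect P (A k)) \<longlonglongrightarrow> 1
       \<and> (\<lambda>k. var P (\<lambda>x. max (A k x) (real am)) / var P (A k)) \<longlonglongrightarrow> 1" by simp
  show ?thesis unfolding Pdef Deq A_def[symmetric] using main .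
qed


end
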